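(* Let $f,g$ be the identity (value $aq$ for ability $a$ in job $q$). In the early contracting game with fully informative grading in which all schools have student abilities uniformly distributed on $[0,1]$, the price of anarchy is at most $4/3$.
   Context: Students form a continuum of unit mass; every school (a continuum of infinitesimal schools) has abilities uniformly distributed on $[0,1]$. Jobs form a continuum of unit mass with qualities in $[0,1]$, continuous CDF $\mu$ with positive density. $Q_T$ is the nondecreasing assortative map (students with ability at most $a$ get exactly the jobs with quality at most $Q_T(a)$). Grading is fully informative. Agents are risk neutral. Early contracting game: stage 1, a job may contract with a uniformly random student of a school (expected ability $1/2$); stage 2, remaining students matched to remaining jobs assortatively by true ability via increasing $\hat Q$. Equilibrium: (1) a stage-1 contract between a school of average $\hat a$ and job $q$ requires $\hat Q^{-1}(q)\le\hat a$ and the school's remaining students' average stage-2 quality at most $q$; (2) no school of average $\hat a$ with stage-2 students and job $q$ with $\hat Q^{-1}(q)<\hat a$ and the school's average stage-2 quality below $q$; (3) among stage-1 jobs, better jobs go to schools of no lower average. Welfare of an assignment: $\int_0^1 q\,\mathbb{E}[A(q)]\,d\mu(q)$ with $A(q)$ the ability of the student assigned to job $q$. Price of anarchy = welfare of $Q_T$ divided by the worst equilibrium welfare. *)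

theory Defs
  imports "HOL-Analysis.Analysis"
begin

(* All schools have abilities uniform on [0,1], hence every school has
   average ability 1/2. *)

definition is_job_density :: "(real \<Rightarrow> real) \<Rightarrow> bool" where
  "is_job_density f \<longleftrightarrow> f \<in> borel_measurable lborel \<and> (\<forall>q\<in>{0..1}. 0 < f q)
     \<and> set_integrable lborel {0..1} f \<and> (LINT q:{0..1}|lborel. f q) = 1"

definition job_cdf :: "(real \<Rightarrow> real) \<Rightarrow> real \<Rightarrow> real" where
  "job_cdf f q = (LINT t:{0..q}|lborel. f t)"

(* Q_T^{-1}(q): ability of the student assigned to job q under the assortative map Q_T
   (students with ability <= a get exactly the jobs with quality <= Q_T(a), i.e. a = mu(Q_T(a))) *)
definition QT_inv :: "(real \<Rightarrow> real) \<Rightarrow> real \<Rightarrow> real" where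
  "QT_inv f q = job_cdf f q"

(* Stage-1 contracting profile: s q in [0,1] is the fraction of jobs of quality q that contract
   in stage 1 (a measurable set S of stage-1 jobs is the special case s = indicator S). *)
definition stage1_mass :: "(real \<Rightarrow> real) \<Rightarrow> (real \<Rightarrow> real) \<Rightarrow> real" where
  "stage1_mass f s = (LINT q:{0..1}|lborel. f q * s q)"

(* Stage 2: remaining students (mass 1 - m, abilities uniform on [0,1] since stage-1 students are
   uniformly random draws) matched assortatively to the remaining jobs.
   Qhat_inv f s q = ability a such that the stage-2 students of ability <= a have exactly the
   same mass as the stage-2 jobs of quality <= q, i.e. Qhat^{-1}(q). *)
definition Qhat_inv :: "(real \<Rightarrow> real) \<Rightarrow> (real \<Rightarrow> real) \<Rightarrow> real \<Rightarrow> real" where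
  "Qhat_inv f s q = (LINT t:{0..q}|lborel. f t * (1 - s t)) / (1 - stage1_mass f s)"

definition Qhat :: "(real \<Rightarrow> real) \<Rightarrow> (real \<Rightarrow> real) \<Rightarrow> real \<Rightarrow> real" where
  "Qhat f s a = Inf {q \<in> {0..1}. a \<le> Qhat_inv f s q}"

(* Average stage-2 quality of a school's stage-2 students (abilities uniform on [0,1]);
   this is the same for every school. *)
definition stage2_avg_quality :: "(real \<Rightarrow> real) \<Rightarrow> (real \<Rightarrow> real) \<Rightarrow> real" where
  "stage2_avg_quality f s = (LINT a:{0..1}|lborel. Qhat f s a)"

(* Equilibrium of the early contracting game (all schools have average ability 1/2).
   (1) stage-1 contracts: Qhat^{-1}(q) <= 1/2 and average stage-2 quality <= q;
   (2) no stage-2 job q with Qhat^{-1}(q) < 1/2 and average stage-2 quality < q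
       (schools with stage-2 students exist since stage-1 mass < 1);
   (3) is vacuous because all schools have the same average 1/2. *)
definition early_eq :: "(real \<Rightarrow> real) \<Rightarrow> (real \<Rightarrow> real) \<Rightarrow> bool" where
  "early_eq f s \<longleftrightarrow> s \<in> borel_measurable lborel \<and> (\<forall>q. 0 \<le> s q \<and> s q \<le> 1)
     \<and> stage1_mass f s < 1
     \<and> (\<forall>q\<in>{0..1}. 0 < s q \<longrightarrow> Qhat_inv f s q \<le> 1/2 \<and> stage2_avg_quality f s \<le> q)
     \<and> (\<forall>q\<in>{0..1}. s q < 1 \<longrightarrow> \<not> (Qhat_inv f s q < 1/2 \<and> stage2_avg_quality f s < q))"

definition eq_ability :: "(real \<Rightarrow> real) \<Rightarrow> (real \<Rightarrow> real) \<Rightarrow> real \<Rightarrow> real" where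
  "eq_ability f s q = s q * (1/2) + (1 - s q) * Qhat_inv f s q"

definition welfare :: "(real \<Rightarrow> real) \<Rightarrow> (real \<Rightarrow> real) \<Rightarrow> real" where
  "welfare f A = (LINT q:{0..1}|lborel. f q * (q * A q))"

end

theory Submission
  imports Defs
begin


lemma cum_integrable:
  fixes h :: "real \<Rightarrow> real"
  assumes "integrable lborel h" "A \<in> sets lborel"
  shows "integrable lborel (\<lambda>r. h r * indicator A r)"
  by (rule integrable_real_mult_indicator[OF assms(2,1)])

lemma cum_mono:
  fixes h :: "real \<Rightarrow> real"
  assumes "integrable lborel h" "\<And>x. 0 \<le> h x"
  shows "mono (\<lambda>q. \<integral>r. h r * indicator {..q} r \<partial>lborel)"
proof (rule monoI)
  fix x y :: real assume "x \<le> y"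
  then show "(\<integral>r. h r * indicator {..x} r \<partial>lborel) \<le> (\<integral>r. h r * indicator {..y} r \<partial>lborel)"
    using assms by (intro integral_mono cum_integrable) (auto simp: indicator_def)
qed

lemma half_square:
  fixes h :: "real \<Rightarrow> real"
  assumes hi: "integrable lborel h" and hn: "\<And>x. 0 \<le> h x"
  shows "(\<integral>q. h q * (\<integral>r. h r * indicator {..q} r \<partial>lborel) \<partial>lborel) = (\<integral>q. h q \<partial>lborel)^2 / 2"
proof -
  have hm[measurable]: "h \<in> borel_measurable lborel" using hi by auto
  define C where "C q = (\<integral>r. h r * indicator {..q} r \<partial>lborel)" for q
  define T where "T = (\<integral>q. h q \<partial>lborel)"
  have Cm: "mono C" unfolding C_def by (rule cum_mono[OF hi hn])
  have Cmeas[measurable]: "C \<in> borel_measurable lborel"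
    using borel_measurable_mono[OF Cm] by simp
  have C0: "0 \<le> C q" for q unfolding C_def using hn by (auto intro!: integral_nonneg_AE)
  have CT: "C q \<le> T" for q unfolding C_def T_def using hi hn
    by (intro integral_mono cum_integrable) (auto simp: indicator_def)
  have T0: "0 \<le> T" unfolding T_def using hn by (auto intro!: integral_nonneg_AE)
  have intHC: "integrable lborel (\<lambda>q. h q * C q)"
  proof (rule Bochner_Integration.integrable_bound[where f="\<lambda>q. h q * T"])
    show "integrable lborel (\<lambda>q. h q * T)" using hi by simp
    show "AE x in lborel. norm (h x * C x) \<le> norm (h x * T)"
      using C0 CT hn T0 by (auto simp: abs_mult intro!: mult_left_mono)
  qed simp
  have inner: "(\<integral>\<^sup>+r. ennreal (h q * h r * indicator {..q} r) \<partial>lborel) = ennreal (h q * C q)" for q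
  proof -
    have "(\<integral>\<^sup>+r. ennreal (h q * h r * indicator {..q} r) \<partial>lborel)
        = (\<integral>\<^sup>+r. ennreal (h q) * ennreal (h r * indicator {..q} r) \<partial>lborel)"
      using hn by (intro nn_integral_cong) (simp add: ennreal_mult mult.assoc)
    also have "\<dots> = ennreal (h q) * (\<integral>\<^sup>+r. ennreal (h r * indicator {..q} r) \<partial>lborel)"
      by (rule nn_integral_cmult) simp
    also have "(\<integral>\<^sup>+r. ennreal (h r * indicator {..q} r) \<partial>lborel) = ennreal (C q)"
      unfolding C_def using hi hn
      by (intro nn_integral_eq_integral cum_integrable) auto
    finally show ?thesis using hn C0 by (simp add: ennreal_mult)
  qed
  define I where "I = (\<integral>\<^sup>+q. \<integral>\<^sup>+r. ennreal (h q * h r * indicator {..q} r) \<partial>lborel \<partial>lborel)"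
  define J where "J = (\<integral>\<^sup>+q. \<integral>\<^sup>+r. ennreal (h q * h r * indicator {q..} r) \<partial>lborel \<partial>lborel)"
  have I_eq: "I = ennreal (\<integral>q. h q * C q \<partial>lborel)"
    unfolding I_def inner using intHC hn C0
    by (intro nn_integral_eq_integral) auto
  have m1: "(\<lambda>(q,r). ennreal (h q * h r * indicator {..q} r)) \<in> borel_measurable (lborel \<Otimes>\<^sub>M lborel)"
  proof -
    have "(\<lambda>(q,r). ennreal (h q * h r * indicator {..q} r)) = (\<lambda>p. ennreal (h (fst p) * h (snd p) * (if snd p \<le> fst p then 1 else 0)))"
      by (auto simp: indicator_def fun_eq_iff)
    then show ?thesis by simp
  qed
  have m2: "(\<lambda>(q,r). ennreal (h q * h r * indicator {q..} r)) \<in> borel_measurable (lborel \<Otimes>\<^sub>M lborel)"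
  proof -
    have "(\<lambda>(q,r). ennreal (h q * h r * indicator {q..} r)) = (\<lambda>p. ennreal (h (fst p) * h (snd p) * (if fst p \<le> snd p then 1 else 0)))"
      by (auto simp: indicator_def fun_eq_iff)
    then show ?thesis by simp
  qed
  have mI1: "(\<lambda>q. \<integral>\<^sup>+r. ennreal (h q * h r * indicator {..q} r) \<partial>lborel) \<in> borel_measurable lborel"
    using lborel.borel_measurable_nn_integral[OF m1] by simp
  have mI2: "(\<lambda>q. \<integral>\<^sup>+r. ennreal (h q * h r * indicator {q..} r) \<partial>lborel) \<in> borel_measurable lborel"
    using lborel.borel_measurable_nn_integral[OF m2] by simp
  have "I = (\<integral>\<^sup>+r. \<integral>\<^sup>+q. ennreal (h q * h r * indicator {..q} r) \<partial>lborel \<partial>lborel)"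
    unfolding I_def by (rule lborel_pair.Fubini'[symmetric]) (use m1 in simp)
  also have "\<dots> = J" unfolding J_def
    by (intro nn_integral_cong) (auto simp: indicator_def mult.commute mult.left_commute)
  finally have IJ: "I = J" .
  have "I + J = (\<integral>\<^sup>+q. (\<integral>\<^sup>+r. ennreal (h q * h r * indicator {..q} r) \<partial>lborel) + (\<integral>\<^sup>+r. ennreal (h q * h r * indicator {q..} r) \<partial>lborel) \<partial>lborel)"
    unfolding I_def J_def by (rule nn_integral_add[symmetric]) (use mI1 mI2 in auto)
  also have "\<dots> = (\<integral>\<^sup>+q. (\<integral>\<^sup>+r. ennreal (h q * h r * indicator {..q} r) + ennreal (h q * h r * indicator {q..} r) \<partial>lborel) \<partial>lborel)"
    by (intro nn_integral_cong nn_integral_add[symmetric]) auto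
  also have "\<dots> = (\<integral>\<^sup>+q. (\<integral>\<^sup>+r. ennreal (h q) * ennreal (h r) \<partial>lborel) \<partial>lborel)"
  proof (rule nn_integral_cong)
    fix q
    have "AE r in lborel. ennreal (h q * h r * indicator {..q} r) + ennreal (h q * h r * indicator {q..} r) = ennreal (h q) * ennreal (h r)"
      using AE_lborel_singleton[of q]
    proof eventually_elim
      case (elim r)
      then show ?case using hn[of q] hn[of r]
        by (cases "r \<le> q") (auto simp: indicator_def ennreal_mult)
    qed
    then show "(\<integral>\<^sup>+r. ennreal (h q * h r * indicator {..q} r) + ennreal (h q * h r * indicator {q..} r) \<partial>lborel) = (\<integral>\<^sup>+r. ennreal (h q) * ennreal (h r) \<partial>lborel)"
      by (rule nn_integral_cong_AE)
  qed
  also have "\<dots> = (\<integral>\<^sup>+q. ennreal (h q) * ennreal T \<partial>lborel)"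
  proof (intro nn_integral_cong)
    fix q
    have "(\<integral>\<^sup>+r. ennreal (h q) * ennreal (h r) \<partial>lborel) = ennreal (h q) * (\<integral>\<^sup>+r. ennreal (h r) \<partial>lborel)"
      by (rule nn_integral_cmult) simp
    also have "(\<integral>\<^sup>+r. ennreal (h r) \<partial>lborel) = ennreal T"
      unfolding T_def using hi hn by (intro nn_integral_eq_integral) auto
    finally show "(\<integral>\<^sup>+r. ennreal (h q) * ennreal (h r) \<partial>lborel) = ennreal (h q) * ennreal T" .
  qed
  also have "\<dots> = (\<integral>\<^sup>+q. ennreal (h q) \<partial>lborel) * ennreal T"
    by (rule nn_integral_multc) simp
  also have "(\<integral>\<^sup>+q. ennreal (h q) \<partial>lborel) = ennreal T"
    unfolding T_def using hi hn by (intro nn_integral_eq_integral) auto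
  finally have "I + J = ennreal T * ennreal T" .
  moreover have X0: "0 \<le> (\<integral>q. h q * C q \<partial>lborel)" using hn C0 by (auto intro!: integral_nonneg_AE)
  ultimately have "ennreal ((\<integral>q. h q * C q \<partial>lborel) + (\<integral>q. h q * C q \<partial>lborel)) = ennreal (T * T)"
    using IJ I_eq T0 by (simp only: ennreal_plus ennreal_mult)
  then have "(\<integral>q. h q * C q \<partial>lborel) + (\<integral>q. h q * C q \<partial>lborel) = T * T"
    using T0 X0 by (subst (asm) ennreal_inj) auto
  then have "2 * (\<integral>q. h q * C q \<partial>lborel) = T * T" by simp
  then show ?thesis unfolding C_def[symmetric] T_def[symmetric] by (simp add: power2_eq_square)
qed

lemma cum_split:
  fixes h :: "real \<Rightarrow> real"
  assumes hi: "integrable lborel h"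
  shows "(\<integral>r. h r * indicator {..x} r \<partial>lborel) + (\<integral>r. h r * indicator {x<..} r \<partial>lborel) = (\<integral>r. h r \<partial>lborel)"
proof -
  have "(\<integral>r. h r * indicator {..x} r \<partial>lborel) + (\<integral>r. h r * indicator {x<..} r \<partial>lborel)
     = (\<integral>r. h r * indicator {..x} r + h r * indicator {x<..} r \<partial>lborel)"
    using Bochner_Integration.integral_add[OF cum_integrable[OF hi, of "{..x}", simplified] cum_integrable[OF hi, of "{x<..}", simplified]] by simp
  also have "\<dots> = (\<integral>r. h r \<partial>lborel)"
    by (intro Bochner_Integration.integral_cong) (auto simp: indicator_def)
  finally show ?thesis .
qed

lemma cum_split2:
  fixes h :: "real \<Rightarrow> real"
  assumes hi: "integrable lborel h" and "t \<le> q"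
  shows "(\<integral>r. h r * indicator {..q} r \<partial>lborel) = (\<integral>r. h r * indicator {..t} r \<partial>lborel) + (\<integral>r. (h r * indicator {t<..} r) * indicator {..q} r \<partial>lborel)"
proof -
  have "(\<integral>r. h r * indicator {..t} r \<partial>lborel) + (\<integral>r. (h r * indicator {t<..} r) * indicator {..q} r \<partial>lborel)
     = (\<integral>r. h r * indicator {..t} r + (h r * indicator {t<..} r) * indicator {..q} r \<partial>lborel)"
    using Bochner_Integration.integral_add[OF cum_integrable[OF hi, of "{..t}", simplified] cum_integrable[OF cum_integrable[OF hi, of "{t<..}", simplified], of "{..q}", simplified]] by simp
  also have "\<dots> = (\<integral>r. h r * indicator {..q} r \<partial>lborel)"
    using assms(2) by (intro Bochner_Integration.integral_cong) (auto simp: indicator_def)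
  finally show ?thesis by simp
qed

lemma half_square_tail:
  fixes h :: "real \<Rightarrow> real"
  assumes hi: "integrable lborel h" and hn: "\<And>x. 0 \<le> h x"
  shows "(\<integral>q. h q * (\<integral>r. h r * indicator {..q} r \<partial>lborel) * indicator {t<..} q \<partial>lborel)
    = ((\<integral>q. h q \<partial>lborel)^2 - (\<integral>r. h r * indicator {..t} r \<partial>lborel)^2) / 2"
proof -
  define C where "C q = (\<integral>r. h r * indicator {..q} r \<partial>lborel)" for q
  define T where "T = (\<integral>q. h q \<partial>lborel)"
  have hm[measurable]: "h \<in> borel_measurable lborel" using hi by auto
  define ht where "ht q = h q * indicator {t<..} q" for q
  have hti: "integrable lborel ht" unfolding ht_def using hi by (intro cum_integrable) auto
  have htn: "0 \<le> ht x" for x unfolding ht_def using hn by auto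
  have Cm: "mono C" unfolding C_def by (rule cum_mono[OF hi hn])
  have Cmeas[measurable]: "C \<in> borel_measurable lborel"
    using borel_measurable_mono[OF Cm] by simp
  have C0: "0 \<le> C q" for q unfolding C_def using hn by (auto intro!: integral_nonneg_AE)
  have CT: "C q \<le> T" for q unfolding C_def T_def using hi hn
    by (intro integral_mono cum_integrable) (auto simp: indicator_def)
  have T0: "0 \<le> T" unfolding T_def using hn by (auto intro!: integral_nonneg_AE)
  have intHC: "integrable lborel (\<lambda>q. h q * C q)"
  proof (rule Bochner_Integration.integrable_bound[where f="\<lambda>q. h q * T"])
    show "integrable lborel (\<lambda>q. h q * T)" using hi by simp
    show "AE x in lborel. norm (h x * C x) \<le> norm (h x * T)"
      using C0 CT hn T0 by (auto simp: abs_mult intro!: mult_left_mono)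
  qed simp
  have sq: "(\<integral>q. ht q * (\<integral>r. ht r * indicator {..q} r \<partial>lborel) \<partial>lborel) = (\<integral>q. ht q \<partial>lborel)^2 / 2"
    by (rule half_square[OF hti htn])
  have htT: "(\<integral>q. ht q \<partial>lborel) = T - C t"
    using cum_split[OF hi, of t] unfolding C_def T_def ht_def by simp
  have "(\<integral>q. ht q * (\<integral>r. ht r * indicator {..q} r \<partial>lborel) \<partial>lborel)
      = (\<integral>q. h q * C q * indicator {t<..} q - C t * ht q \<partial>lborel)"
  proof (rule Bochner_Integration.integral_cong[OF refl])
    fix q :: real assume "q \<in> space lborel"
    show "ht q * (\<integral>r. ht r * indicator {..q} r \<partial>lborel) = h q * C q * indicator {t<..} q - C t * ht q"
    proof (cases "t < q")
      case True
      then have "C q = C t + (\<integral>r. ht r * indicator {..q} r \<partial>lborel)"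
        unfolding C_def ht_def by (intro cum_split2[OF hi]) auto
      then show ?thesis unfolding ht_def using True by (simp add: algebra_simps)
    next
      case False
      then show ?thesis unfolding ht_def by simp
    qed
  qed
  also have "\<dots> = (\<integral>q. h q * C q * indicator {t<..} q \<partial>lborel) - C t * (\<integral>q. ht q \<partial>lborel)"
    using Bochner_Integration.integral_diff[OF cum_integrable[OF intHC, of "{t<..}", simplified] integrable_mult_right[OF hti, of "C t"]] by simp
  finally have E: "(\<integral>q. ht q * (\<integral>r. ht r * indicator {..q} r \<partial>lborel) \<partial>lborel) = (\<integral>q. h q * C q * indicator {t<..} q \<partial>lborel) - C t * (T - C t)"
    using htT by simp
  have sq': "(\<integral>q. ht q * (\<integral>r. ht r * indicator {..q} r \<partial>lborel) \<partial>lborel) = (T - C t)^2/2"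
    using sq htT by simp
  have "(\<integral>q. h q * C q * indicator {t<..} q \<partial>lborel) = (T - C t)^2/2 + C t * (T - C t)"
    using E sq' by linarith
  then show ?thesis unfolding C_def[symmetric] T_def[symmetric] by (simp add: power2_eq_square field_simps)
qed



definition RE :: "real \<Rightarrow> real \<Rightarrow> real \<Rightarrow> real \<Rightarrow> real" where
  "RE m gam St Gt = (m - St)/2 + (gam^2 - Gt^2)/(2*gam)"
definition RT :: "real \<Rightarrow> real" where
  "RT x = (1 - x^2)/2"

lemma diff_formula:
  assumes "0 < gam" "m = 1 - gam" "x = St + gam * y"
  shows "4 * RE m gam St (gam*y) - 3 * RT x = 1/2 - 2*x + 3/2*x^2 + 2*gam*y*(1-y)"
  unfolding RE_def RT_def assms(2,3) using assms(1) by (simp add: field_simps power2_eq_square)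

lemma algA:
  assumes "0 < gam" "gam \<le> 1" "m = 1 - gam" "x = gam * y" "0 \<le> y" "y \<le> 1/2"
  shows "0 \<le> 4 * RE m gam 0 (gam*y) - 3 * RT x + (1/3) * ((1 - y) - 1)"
proof -
  have e: "4 * RE m gam 0 (gam*y) - 3 * RT x = 1/2 - 2*x + 3/2*x^2 + 2*gam*y*(1-y)"
    using assms by (intro diff_formula) auto
  have e2: "1/2 - 2*x + 3/2*x^2 + 2*gam*y*(1-y) = 1/2 + y^2 * (3/2*gam^2 - 2*gam)"
    using assms by (simp add: field_simps power2_eq_square)
  have "0 \<le> 3/2 * (gam - 2/3)^2" by simp
  then have k: "-(2/3) \<le> 3/2*gam^2 - 2*gam" by (simp add: power2_eq_square field_simps)
  have "y^2 * (-(2/3)) \<le> y^2 * (3/2*gam^2 - 2*gam)" by (rule mult_left_mono[OF k]) simp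
  moreover have "y^2 \<le> 1/4" using assms power_mono[of y "1/2" 2] by (simp add: power2_eq_square)
  moreover have lin: "\<And>A Y::real. Y * (-(2/3)) \<le> A \<Longrightarrow> Y \<le> 1/4 \<Longrightarrow> y \<le> 1/2 \<Longrightarrow> 0 \<le> 1/2 + A + 1/3 * (1 - y - 1)"
    by (simp add: field_simps)
  ultimately show ?thesis unfolding e e2 using assms by blast
qed

lemma algB:
  assumes "0 < gam" "m = 1 - gam" "x = St + gam * y" "0 \<le> y" "y \<le> 1/2"
  shows "0 \<le> 4 * RE m gam St (gam*y) - 3 * RT x + (1/3) * (1 - y)"
proof -
  have e: "4 * RE m gam St (gam*y) - 3 * RT x = 1/2 - 2*x + 3/2*x^2 + 2*gam*y*(1-y)"
    using assms by (intro diff_formula) auto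
  have "0 \<le> 3/2 * (x - 2/3)^2" by simp
  then have k: "0 \<le> 3/2*x^2 - 2*x + 2/3" by (simp add: power2_eq_square field_simps)
  have "0 \<le> gam*y*(1-y)" using assms by simp
  moreover have lin: "\<And>P Q::real. 0 \<le> P \<Longrightarrow> 0 \<le> Q - 2*x + 2/3 \<Longrightarrow> y \<le> 1/2 \<Longrightarrow> 0 \<le> 1/2 - 2*x + Q + 2*P + 1/3 * (1 - y)"
    by (simp add: field_simps)
  ultimately show ?thesis unfolding e using k assms by (metis mult.assoc)
qed

lemma algC:
  assumes "0 < gam" "m = 1 - gam" "x = m + gam * y" "1/2 < y" "y \<le> 1"
  shows "0 \<le> 4 * RE m gam m (gam*y) - 3 * RT x + (1/3) * (1 - y)"
proof -
  have e: "4 * RE m gam m (gam*y) - 3 * RT x = 1/2 - 2*x + 3/2*x^2 + 2*gam*y*(1-y)"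
    using assms by (intro diff_formula) auto
  define z where "z = gam * (1 - y)"
  have e2: "1/2 - 2*x + 3/2*x^2 + 2*gam*y*(1-y) = z * (2 - 4*(1-y) + 3*z) / 2"
    unfolding z_def assms(3) assms(2) using assms(1) by (simp add: field_simps power2_eq_square)
  have "0 \<le> z" unfolding z_def using assms by simp
  moreover have "0 \<le> 2 - 4*(1-y) + 3*z" using \<open>0 \<le> z\<close> assms by (simp add: field_simps)
  ultimately have "0 \<le> z * (2 - 4*(1-y) + 3*z) / 2" by simp
  moreover have "0 \<le> 1 - y" using assms by simp
  ultimately show ?thesis unfolding e e2 by simp
qed

lemma algD:
  assumes "0 \<le> x" "x \<le> 1"
  shows "0 \<le> 4 * RE 0 1 0 x - 3 * RT x"
proof -
  have e: "4 * RE 0 1 0 x - 3 * RT x = (1 - x^2)/2" unfolding RE_def RT_def by (simp add: field_simps)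
  have "x^2 \<le> 1" using assms power_mono[of x 1 2] by simp
  then show ?thesis unfolding e by simp
qed



lemma ind01_int: "integrable lborel (\<lambda>t::real. (K::real) * indicator {0..1} t)"
  by simp

lemma threshold:
  fixes h A R :: "real \<Rightarrow> real" and B :: real
  assumes hi: "integrable lborel h" and hn: "\<And>x. 0 \<le> h x" and hs: "\<And>x. x \<notin> {0..1} \<Longrightarrow> h x = 0"
    and Am[measurable]: "A \<in> borel_measurable lborel" and An: "\<And>x. 0 \<le> A x" and Ab: "\<And>x. A x \<le> B"
    and Rm[measurable]: "R \<in> borel_measurable lborel"
    and RR: "\<And>t. t \<in> {0..1} \<Longrightarrow> R t = (\<integral>q. h q * A q * indicator {t<..} q \<partial>lborel)"
  shows "(\<integral>q. h q * (q * A q) \<partial>lborel) = (\<integral>t. R t * indicator {0..1} t \<partial>lborel)"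
proof -
  have hm[measurable]: "h \<in> borel_measurable lborel" using hi by auto
  have B0: "0 \<le> B" using An[of 0] Ab[of 0] by linarith
  have hA_int: "integrable lborel (\<lambda>q. h q * A q)"
  proof (rule Bochner_Integration.integrable_bound[where f="\<lambda>q. h q * B"])
    show "integrable lborel (\<lambda>q. h q * B)" using hi by simp
    show "AE x in lborel. norm (h x * A x) \<le> norm (h x * B)"
      using hn An Ab B0 by (auto simp: abs_mult intro!: mult_left_mono)
  qed simp
  have L_int: "integrable lborel (\<lambda>q. h q * (q * A q))"
  proof (rule Bochner_Integration.integrable_bound[where f="\<lambda>q. h q * A q"])
    show "integrable lborel (\<lambda>q. h q * A q)" by (rule hA_int)
    show "AE x in lborel. norm (h x * (x * A x)) \<le> norm (h x * A x)"
    proof (rule AE_I2)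
      fix x :: real
      show "norm (h x * (x * A x)) \<le> norm (h x * A x)"
      proof (cases "x \<in> {0..1}")
        case True
        then show ?thesis using hn[of x] An[of x]
          by (auto simp: abs_mult intro!: mult_left_mono mult_left_le_one_le)
      next
        case False then show ?thesis using hs by simp
      qed
    qed
  qed simp
  have P0: "0 \<le> h q * (q * A q)" for q
  proof (cases "q \<in> {0..1}")
    case True then show ?thesis using hn[of q] An[of q] by simp
  next
    case False then show ?thesis using hs[OF False] by simp
  qed
  define K where "K = (\<integral>q. h q * A q \<partial>lborel)"
  have R_bound: "\<bar>R t\<bar> \<le> K" if "t \<in> {0..1}" for t
  proof -
    have "0 \<le> R t" unfolding RR[OF that] using hn An by (auto intro!: integral_nonneg_AE)
    moreover have "R t \<le> K" unfolding RR[OF that] K_def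
      using hn An by (intro integral_mono cum_integrable hA_int) (auto simp: indicator_def)
    ultimately show ?thesis by simp
  qed
  have R_int: "integrable lborel (\<lambda>t. R t * indicator {0..1} t)"
  proof (rule Bochner_Integration.integrable_bound[where f="\<lambda>t::real. K * indicator {0..1} t"])
    show "integrable lborel (\<lambda>t::real. K * indicator {0..1} t)" by simp
    show "AE x in lborel. norm (R x * indicator {0..1} x) \<le> norm (K * indicator {0..1} x)"
    proof (rule AE_I2)
      fix x :: real
      show "norm (R x * indicator {0..1} x) \<le> norm (K * indicator {0..1} x)"
        using R_bound[of x] by (cases "x \<in> {0..1}") auto
    qed
  qed simp
  have R0: "0 \<le> R t * indicator {0..1} t" for t
    using R_bound[of t] RR[of t] hn An by (auto simp: indicator_def intro!: integral_nonneg_AE)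
  define F where "F q t = ennreal (h q * A q * indicator {t<..} q * indicator {0..1} t)" for q t
  have Fm: "case_prod F \<in> borel_measurable (lborel \<Otimes>\<^sub>M lborel)"
  proof -
    have "case_prod F = (\<lambda>p. ennreal (h (fst p) * A (fst p) * (if snd p < fst p then 1 else 0) * (if 0 \<le> snd p \<and> snd p \<le> 1 then 1 else 0)))"
      by (auto simp: F_def indicator_def fun_eq_iff)
    then show ?thesis by simp
  qed
  have inner1: "(\<integral>\<^sup>+t. F q t \<partial>lborel) = ennreal (h q * (q * A q))" for q
  proof (cases "q \<in> {0..1}")
    case True
    have "(\<integral>\<^sup>+t. F q t \<partial>lborel) = (\<integral>\<^sup>+t. ennreal (h q * A q) * indicator {0..<q} t \<partial>lborel)"
      unfolding F_def using True hn An by (intro nn_integral_cong) (auto simp: indicator_def)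
    also have "\<dots> = ennreal (h q * A q) * emeasure lborel {0..<q}"
      by (rule nn_integral_cmult_indicator) simp
    also have "\<dots> = ennreal (h q * (q * A q))"
      using True hn[of q] An[of q] by (simp add: ennreal_mult[symmetric] mult_ac)
    finally show ?thesis .
  next
    case False
    then show ?thesis unfolding F_def using hs[OF False] by simp
  qed
  have inner2: "(\<integral>\<^sup>+q. F q t \<partial>lborel) = ennreal (R t * indicator {0..1} t)" for t
  proof (cases "t \<in> {0..1}")
    case True
    have "(\<integral>\<^sup>+q. F q t \<partial>lborel) = (\<integral>\<^sup>+q. ennreal (h q * A q * indicator {t<..} q) \<partial>lborel)"
      unfolding F_def using True by (intro nn_integral_cong) auto
    also have "\<dots> = ennreal (R t)"
      unfolding RR[OF True] using hn An
      by (intro nn_integral_eq_integral cum_integrable hA_int) auto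
    finally show ?thesis using True by simp
  next
    case False
    then show ?thesis unfolding F_def by simp
  qed
  have "ennreal (\<integral>q. h q * (q * A q) \<partial>lborel) = (\<integral>\<^sup>+q. ennreal (h q * (q * A q)) \<partial>lborel)"
    using L_int P0 by (intro nn_integral_eq_integral[symmetric]) auto
  also have "\<dots> = (\<integral>\<^sup>+q. \<integral>\<^sup>+t. F q t \<partial>lborel \<partial>lborel)" using inner1 by simp
  also have "\<dots> = (\<integral>\<^sup>+t. \<integral>\<^sup>+q. F q t \<partial>lborel \<partial>lborel)"
    by (rule lborel_pair.Fubini'[OF Fm, symmetric])
  also have "\<dots> = (\<integral>\<^sup>+t. ennreal (R t * indicator {0..1} t) \<partial>lborel)" using inner2 by simp
  also have "\<dots> = ennreal (\<integral>t. R t * indicator {0..1} t \<partial>lborel)"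
    using R_int R0 by (intro nn_integral_eq_integral) auto
  finally have "ennreal (\<integral>q. h q * (q * A q) \<partial>lborel) = ennreal (\<integral>t. R t * indicator {0..1} t \<partial>lborel)" .
  moreover have "0 \<le> (\<integral>q. h q * (q * A q) \<partial>lborel)"
    using P0 by (intro integral_nonneg_AE AE_I2) auto
  moreover have "0 \<le> (\<integral>t. R t * indicator {0..1} t \<partial>lborel)"
    using R0 by (intro integral_nonneg_AE AE_I2) auto
  ultimately show ?thesis by (subst (asm) ennreal_inj) auto
qed



lemma layer:
  fixes H Q :: "real \<Rightarrow> real"
  assumes Hmono: "mono H" and H01: "\<And>t. t \<in> {0..1} \<Longrightarrow> 0 \<le> H t \<and> H t \<le> 1"
    and Qm[measurable]: "Q \<in> borel_measurable lborel"
    and Qge: "\<And>a t. a \<in> {0..1} \<Longrightarrow> t \<in> {0..1} \<Longrightarrow> H t < a \<Longrightarrow> t \<le> Q a"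
    and Q01: "\<And>a. a \<in> {0..1} \<Longrightarrow> 0 \<le> Q a \<and> Q a \<le> 1"
  shows "(\<integral>t. (1 - H t) * indicator {0..1} t \<partial>lborel) \<le> (\<integral>a. Q a * indicator {0..1} a \<partial>lborel)"
proof -
  have Hm[measurable]: "H \<in> borel_measurable lborel" using borel_measurable_mono[OF Hmono] by simp
  define F where "F a t = (indicator {0..1} a * indicator {0..1} t * (if H t < a then 1 else 0) :: ennreal)" for a t
  have Fm: "case_prod F \<in> borel_measurable (lborel \<Otimes>\<^sub>M lborel)"
  proof -
    have "case_prod F = (\<lambda>p. ennreal ((if 0 \<le> fst p \<and> fst p \<le> 1 then 1 else 0) * (if 0 \<le> snd p \<and> snd p \<le> 1 then 1 else 0) * (if H (snd p) < fst p then 1 else 0)))"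
      by (auto simp: F_def indicator_def fun_eq_iff)
    then show ?thesis by simp
  qed
  have in1: "(\<integral>\<^sup>+a. F a t \<partial>lborel) = ennreal ((1 - H t) * indicator {0..1} t)" for t
  proof (cases "t \<in> {0..1}")
    case True
    have "(\<integral>\<^sup>+a. F a t \<partial>lborel) = (\<integral>\<^sup>+a. indicator {H t<..1} a \<partial>lborel)"
      unfolding F_def using True H01[OF True] by (intro nn_integral_cong) (auto simp: indicator_def)
    also have "\<dots> = ennreal (1 - H t)" using H01[OF True] by simp
    finally show ?thesis using True by simp
  next
    case False then show ?thesis unfolding F_def by simp
  qed
  have in2: "(\<integral>\<^sup>+t. F a t \<partial>lborel) \<le> ennreal (Q a * indicator {0..1} a)" for a
  proof (cases "a \<in> {0..1}")
    case True
    have "(\<integral>\<^sup>+t. F a t \<partial>lborel) \<le> (\<integral>\<^sup>+t. indicator {0..Q a} t \<partial>lborel)"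
      unfolding F_def using True Qge[OF True] by (intro nn_integral_mono) (auto simp: indicator_def)
    also have "\<dots> = ennreal (Q a)" using Q01[OF True] by simp
    finally show ?thesis using True by simp
  next
    case False then show ?thesis unfolding F_def by simp
  qed
  have L0: "0 \<le> (1 - H t) * indicator {0..1} t" for t using H01[of t] by (auto simp: indicator_def)
  have R0: "0 \<le> Q a * indicator {0..1} a" for a using Q01[of a] by (auto simp: indicator_def)
  have Lint: "integrable lborel (\<lambda>t. (1 - H t) * indicator {0..1} t)"
  proof (rule Bochner_Integration.integrable_bound[where f="\<lambda>t::real. indicator {0..1} t :: real"])
    show "integrable lborel (\<lambda>t::real. indicator {0..1} t :: real)" by simp
    show "AE x in lborel. norm ((1 - H x) * indicator {0..1} x) \<le> norm (indicator {0..1} x :: real)"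
    proof (rule AE_I2)
      fix x :: real
      show "norm ((1 - H x) * indicator {0..1} x) \<le> norm (indicator {0..1} x :: real)"
        using H01[of x] by (cases "x \<in> {0..1}") auto
    qed
  qed simp
  have Rint: "integrable lborel (\<lambda>a. Q a * indicator {0..1} a)"
  proof (rule Bochner_Integration.integrable_bound[where f="\<lambda>t::real. indicator {0..1} t :: real"])
    show "integrable lborel (\<lambda>t::real. indicator {0..1} t :: real)" by simp
    show "AE x in lborel. norm (Q x * indicator {0..1} x) \<le> norm (indicator {0..1} x :: real)"
    proof (rule AE_I2)
      fix x :: real
      show "norm (Q x * indicator {0..1} x) \<le> norm (indicator {0..1} x :: real)"
        using Q01[of x] by (cases "x \<in> {0..1}") auto
    qed
  qed simp
  have "ennreal (\<integral>t. (1 - H t) * indicator {0..1} t \<partial>lborel) = (\<integral>\<^sup>+t. ennreal ((1 - H t) * indicator {0..1} t) \<partial>lborel)"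
    using Lint L0 by (intro nn_integral_eq_integral[symmetric]) auto
  also have "\<dots> = (\<integral>\<^sup>+t. \<integral>\<^sup>+a. F a t \<partial>lborel \<partial>lborel)" using in1 by simp
  also have "\<dots> = (\<integral>\<^sup>+a. \<integral>\<^sup>+t. F a t \<partial>lborel \<partial>lborel)"
    by (rule lborel_pair.Fubini'[OF Fm])
  also have "\<dots> \<le> (\<integral>\<^sup>+a. ennreal (Q a * indicator {0..1} a) \<partial>lborel)"
    using in2 by (intro nn_integral_mono) auto
  also have "\<dots> = ennreal (\<integral>a. Q a * indicator {0..1} a \<partial>lborel)"
    using Rint R0 by (intro nn_integral_eq_integral) auto
  finally have "ennreal (\<integral>t. (1 - H t) * indicator {0..1} t \<partial>lborel) \<le> ennreal (\<integral>a. Q a * indicator {0..1} a \<partial>lborel)" .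
  moreover have "0 \<le> (\<integral>a. Q a * indicator {0..1} a \<partial>lborel)"
    using R0 by (intro integral_nonneg_AE AE_I2) auto
  ultimately show ?thesis by (simp add: ennreal_le_iff)
qed



lemma bdd_int:
  fixes g :: "real \<Rightarrow> real"
  assumes [measurable]: "g \<in> borel_measurable lborel" and b: "\<And>t. t \<in> {0..1} \<Longrightarrow> \<bar>g t\<bar> \<le> K"
  shows "integrable lborel (\<lambda>t. g t * indicator {0..1} t)"
proof (rule Bochner_Integration.integrable_bound[where f="\<lambda>t::real. K * indicator {0..1} t"])
  show "integrable lborel (\<lambda>t::real. K * indicator {0..1} t)" by simp
  show "AE x in lborel. norm (g x * indicator {0..1} x) \<le> norm (K * indicator {0..1} x)"
  proof (rule AE_I2)
    fix x :: real
    show "norm (g x * indicator {0..1} x) \<le> norm (K * indicator {0..1} x)"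
      using b[of x] by (cases "x \<in> {0..1}") auto
  qed
qed simp

lemma setup_facts:
  fixes f s :: "real \<Rightarrow> real"
  assumes jd: "is_job_density f" and eq: "early_eq f s"
  defines "F \<equiv> \<lambda>q. f q * indicator {0..1} q"
    and "Fs \<equiv> \<lambda>q. f q * s q * indicator {0..1} q"
    and "Fg \<equiv> \<lambda>q. f q * (1 - s q) * indicator {0..1} q"
  shows "integrable lborel F" "integrable lborel Fs" "integrable lborel Fg"
    "\<And>x. 0 \<le> F x" "\<And>x. 0 \<le> Fs x" "\<And>x. 0 \<le> Fg x"
    "(\<integral>q. F q \<partial>lborel) = 1" "(\<integral>q. Fs q \<partial>lborel) = stage1_mass f s"
    "(\<integral>q. Fg q \<partial>lborel) = 1 - stage1_mass f s"
proof -
  from jd have fm[measurable]: "f \<in> borel_measurable lborel" and fpos: "\<And>q. q \<in> {0..1} \<Longrightarrow> 0 < f q"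
    and fint: "set_integrable lborel {0..1} f" and f1: "(LINT q:{0..1}|lborel. f q) = 1"
    unfolding is_job_density_def by auto
  from eq have sm[measurable]: "s \<in> borel_measurable lborel" and s01: "\<And>q. 0 \<le> s q \<and> s q \<le> 1"
    unfolding early_eq_def by auto
  show Fi: "integrable lborel F" using fint unfolding set_integrable_def F_def by (simp add: mult.commute)
  show Fn: "\<And>x. 0 \<le> F x" unfolding F_def using fpos by (auto simp: indicator_def less_imp_le)
  show Fsn: "\<And>x. 0 \<le> Fs x" unfolding Fs_def using fpos s01 by (auto simp: indicator_def less_imp_le)
  show Fgn: "\<And>x. 0 \<le> Fg x" unfolding Fg_def using fpos s01 by (auto simp: indicator_def less_imp_le)
  show Fsi: "integrable lborel Fs"
  proof (rule Bochner_Integration.integrable_bound[OF Fi])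
    show "Fs \<in> borel_measurable lborel" unfolding Fs_def by simp
    show "AE x in lborel. norm (Fs x) \<le> norm (F x)"
      using Fn Fsn s01 unfolding F_def Fs_def
      by (intro AE_I2) (auto simp: indicator_def abs_mult intro!: mult_left_le)
  qed
  show Fgi: "integrable lborel Fg"
  proof (rule Bochner_Integration.integrable_bound[OF Fi])
    show "Fg \<in> borel_measurable lborel" unfolding Fg_def by simp
    show "AE x in lborel. norm (Fg x) \<le> norm (F x)"
      using Fn Fgn s01 unfolding F_def Fg_def
      by (intro AE_I2) (auto simp: indicator_def abs_mult intro!: mult_left_le)
  qed
  show F1: "(\<integral>q. F q \<partial>lborel) = 1" using f1 unfolding set_lebesgue_integral_def F_def by (simp add: mult.commute)
  show Fs1: "(\<integral>q. Fs q \<partial>lborel) = stage1_mass f s"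
    unfolding stage1_mass_def set_lebesgue_integral_def Fs_def by (simp add: mult.commute)
  have "(\<integral>q. Fg q \<partial>lborel) = (\<integral>q. F q - Fs q \<partial>lborel)"
    unfolding Fg_def F_def Fs_def by (intro Bochner_Integration.integral_cong) (auto simp: algebra_simps)
  also have "\<dots> = 1 - stage1_mass f s" using Fi Fsi F1 Fs1 by simp
  finally show "(\<integral>q. Fg q \<partial>lborel) = 1 - stage1_mass f s" .
qed



theorem mainTheorem12:
  fixes f s :: "real \<Rightarrow> real"
  assumes jd: "is_job_density f"
    and eq: "early_eq f s"
  shows "welfare f (QT_inv f) \<le> 4/3 * welfare f (eq_ability f s)"
proof -
  from jd have fm[measurable]: "f \<in> borel_measurable lborel" and fpos: "\<And>q. q \<in> {0..1} \<Longrightarrow> 0 < f q"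
    unfolding is_job_density_def by auto
  from eq have sm[measurable]: "s \<in> borel_measurable lborel" and s01: "\<And>q. 0 \<le> s q \<and> s q \<le> 1"
    and mlt: "stage1_mass f s < 1"
    and c1: "\<And>q. q \<in> {0..1} \<Longrightarrow> 0 < s q \<Longrightarrow> Qhat_inv f s q \<le> 1/2 \<and> stage2_avg_quality f s \<le> q"
    unfolding early_eq_def by auto
  define F where "F \<equiv> \<lambda>q. f q * indicator {0..1} q :: real"
  define Fs where "Fs \<equiv> \<lambda>q. f q * s q * indicator {0..1} q :: real"
  define Fg where "Fg \<equiv> \<lambda>q. f q * (1 - s q) * indicator {0..1} q :: real"
  note sf = setup_facts[OF jd eq, folded F_def Fs_def Fg_def]
  have Fi: "integrable lborel F" and Fsi: "integrable lborel Fs" and Fgi: "integrable lborel Fg"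
    using sf by auto
  have Fn: "\<And>x. 0 \<le> F x" and Fsn: "\<And>x. 0 \<le> Fs x" and Fgn: "\<And>x. 0 \<le> Fg x"
    using sf(4-6) unfolding F_def Fs_def Fg_def by auto
  define m where "m = stage1_mass f s"
  define gam where "gam = 1 - m"
  define c where "c = stage2_avg_quality f s"
  have F1: "(\<integral>q. F q \<partial>lborel) = 1" and Fs1: "(\<integral>q. Fs q \<partial>lborel) = m"
    and Fg1: "(\<integral>q. Fg q \<partial>lborel) = gam"
    using sf unfolding m_def gam_def by auto
  define mu where "mu x = (\<integral>r. F r * indicator {..x} r \<partial>lborel)" for x
  define S where "S x = (\<integral>r. Fs r * indicator {..x} r \<partial>lborel)" for x
  define G where "G x = (\<integral>r. Fg r * indicator {..x} r \<partial>lborel)" for x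
  have mu_mono: "mono mu" unfolding mu_def by (rule cum_mono[OF Fi Fn])
  have S_mono: "mono S" unfolding S_def by (rule cum_mono[OF Fsi Fsn])
  have G_mono: "mono G" unfolding G_def by (rule cum_mono[OF Fgi Fgn])
  have mum[measurable]: "mu \<in> borel_measurable lborel" using borel_measurable_mono[OF mu_mono] by simp
  have Sm[measurable]: "S \<in> borel_measurable lborel" using borel_measurable_mono[OF S_mono] by simp
  have Gm[measurable]: "G \<in> borel_measurable lborel" using borel_measurable_mono[OF G_mono] by simp
  have m0: "0 \<le> m" using Fsn unfolding Fs1[symmetric] by (auto intro!: integral_nonneg_AE)
  have gam0: "0 < gam" using mlt unfolding gam_def m_def by simp
  have gam1: "gam \<le> 1" using m0 unfolding gam_def by simp
  have S_lo: "0 \<le> S x" for x unfolding S_def using Fsn by (auto intro!: integral_nonneg_AE)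
  have S_hi: "S x \<le> m" for x unfolding S_def Fs1[symmetric] using Fsn
    by (intro integral_mono cum_integrable Fsi) (auto simp: indicator_def)
  have G_lo: "0 \<le> G x" for x unfolding G_def using Fgn by (auto intro!: integral_nonneg_AE)
  have G_hi: "G x \<le> gam" for x unfolding G_def Fg1[symmetric] using Fgn
    by (intro integral_mono cum_integrable Fgi) (auto simp: indicator_def)
  have mu_add: "mu x = S x + G x" for x
  proof -
    have "S x + G x = (\<integral>r. Fs r * indicator {..x} r + Fg r * indicator {..x} r \<partial>lborel)"
      unfolding S_def G_def
      using Bochner_Integration.integral_add[OF cum_integrable[OF Fsi, of "{..x}", simplified] cum_integrable[OF Fgi, of "{..x}", simplified]]
      by simp
    also have "\<dots> = mu x" unfolding mu_def F_def Fs_def Fg_def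
      by (intro Bochner_Integration.integral_cong) (auto simp: algebra_simps)
    finally show ?thesis by simp
  qed
  have G1: "G 1 = gam"
  proof -
    have "G 1 = (\<integral>r. Fg r \<partial>lborel)" unfolding G_def Fg_def
      by (intro Bochner_Integration.integral_cong) (auto simp: indicator_def)
    then show ?thesis using Fg1 by simp
  qed
  have cdf_eq: "job_cdf f q = mu q" if "q \<in> {0..1}" for q
    unfolding job_cdf_def mu_def F_def set_lebesgue_integral_def using that
    by (intro Bochner_Integration.integral_cong) (auto simp: indicator_def)
  have qinv_eq: "Qhat_inv f s q = G q / gam" if "q \<in> {0..1}" for q
  proof -
    have "(LINT t:{0..q}|lborel. f t * (1 - s t)) = G q"
      unfolding G_def Fg_def set_lebesgue_integral_def using that
      by (intro Bochner_Integration.integral_cong) (auto simp: indicator_def)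
    then show ?thesis unfolding Qhat_inv_def gam_def m_def by simp
  qed
  have mu_lo: "0 \<le> mu x" for x using mu_add S_lo G_lo by (simp add: add_nonneg_nonneg)
  have mu_hi: "mu x \<le> 1" for x unfolding mu_def F1[symmetric] using Fn
    by (intro integral_mono cum_integrable Fi) (auto simp: indicator_def)
  define E where "E q = s q * (1/2) + (1 - s q) * (G q / gam)" for q
  have Em[measurable]: "E \<in> borel_measurable lborel" unfolding E_def by simp
  have E_lo: "0 \<le> E q" for q unfolding E_def using s01[of q] G_lo[of q] gam0 by simp
  have E_hi: "E q \<le> 1" for q
  proof -
    have "G q / gam \<le> 1" using G_hi[of q] gam0 by simp
    then have "(1 - s q) * (G q / gam) \<le> (1 - s q) * 1" using s01[of q] by (intro mult_left_mono) auto
    then show ?thesis unfolding E_def using s01[of q] by simp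
  qed
  have WT: "welfare f (QT_inv f) = (\<integral>q. F q * (q * mu q) \<partial>lborel)"
    unfolding welfare_def set_lebesgue_integral_def QT_inv_def F_def
    by (intro Bochner_Integration.integral_cong) (auto simp: indicator_def cdf_eq)
  have WE: "welfare f (eq_ability f s) = (\<integral>q. F q * (q * E q) \<partial>lborel)"
    unfolding welfare_def set_lebesgue_integral_def eq_ability_def F_def E_def
    by (intro Bochner_Integration.integral_cong) (auto simp: indicator_def qinv_eq)
  have WT2: "(\<integral>q. F q * (q * mu q) \<partial>lborel) = (\<integral>t. RT (mu t) * indicator {0..1} t \<partial>lborel)"
  proof (rule threshold[OF Fi Fn _ mum mu_lo mu_hi])
    show "\<And>x. x \<notin> {0..1} \<Longrightarrow> F x = 0" unfolding F_def by simp
    show "(\<lambda>t. RT (mu t)) \<in> borel_measurable lborel" unfolding RT_def by simp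
    fix t :: real assume "t \<in> {0..1}"
    show "RT (mu t) = (\<integral>q. F q * mu q * indicator {t<..} q \<partial>lborel)"
      using half_square_tail[OF Fi Fn, of t] unfolding RT_def mu_def F1 by simp
  qed
  have FgG_int: "integrable lborel (\<lambda>q. Fg q * G q)"
  proof (rule Bochner_Integration.integrable_bound[where f="\<lambda>q. Fg q * gam"])
    show "integrable lborel (\<lambda>q. Fg q * gam)" using Fgi by simp
    show "AE x in lborel. norm (Fg x * G x) \<le> norm (Fg x * gam)"
      using G_lo G_hi Fgn gam0 by (intro AE_I2) (auto simp: abs_mult intro!: mult_left_mono)
  qed (use Fgi in simp)
  have WE2: "(\<integral>q. F q * (q * E q) \<partial>lborel) = (\<integral>t. RE m gam (S t) (G t) * indicator {0..1} t \<partial>lborel)"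
  proof (rule threshold[OF Fi Fn _ Em E_lo E_hi])
    show "\<And>x. x \<notin> {0..1} \<Longrightarrow> F x = 0" unfolding F_def by simp
    show "(\<lambda>t. RE m gam (S t) (G t)) \<in> borel_measurable lborel" unfolding RE_def by simp
    fix t :: real assume "t \<in> {0..1}"
    have "(\<integral>q. F q * E q * indicator {t<..} q \<partial>lborel)
        = (\<integral>q. (1/2) * (Fs q * indicator {t<..} q) + (1/gam) * (Fg q * G q * indicator {t<..} q) \<partial>lborel)"
      unfolding F_def E_def Fs_def Fg_def using gam0
      by (intro Bochner_Integration.integral_cong) (auto simp: field_simps indicator_def)
    also have "\<dots> = (1/2) * (\<integral>q. Fs q * indicator {t<..} q \<partial>lborel) + (1/gam) * (\<integral>q. Fg q * G q * indicator {t<..} q \<partial>lborel)"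
      using Bochner_Integration.integral_add[OF integrable_mult_right[OF cum_integrable[OF Fsi, of "{t<..}", simplified], of "1/2"]
          integrable_mult_right[OF cum_integrable[OF FgG_int, of "{t<..}", simplified], of "1/gam"]]
      by simp
    also have "(\<integral>q. Fs q * indicator {t<..} q \<partial>lborel) = m - S t"
      using cum_split[OF Fsi, of t] Fs1 unfolding S_def by simp
    also have "(\<integral>q. Fg q * G q * indicator {t<..} q \<partial>lborel) = (gam^2 - (G t)^2)/2"
      using half_square_tail[OF Fgi Fgn, of t] Fg1 unfolding G_def by simp
    finally show "RE m gam (S t) (G t) = (\<integral>q. F q * E q * indicator {t<..} q \<partial>lborel)"
      unfolding RE_def by simp
  qed
  define Hh where "Hh t = G t / gam" for t
  define Q where "Q a = Inf {q \<in> {0..1}. max 0 (min 1 a) \<le> Hh q}" for a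
  have Hh_mono: "mono Hh" unfolding Hh_def using G_mono gam0 by (auto simp: mono_def divide_right_mono)
  have Hh01: "0 \<le> Hh t \<and> Hh t \<le> 1" for t unfolding Hh_def using G_lo[of t] G_hi[of t] gam0 by simp
  have Hh1: "Hh 1 = 1" unfolding Hh_def G1 using gam0 by simp
  have Qne: "1 \<in> {q \<in> {0..1}. max 0 (min 1 a) \<le> Hh q}" for a using Hh1 by simp
  have Qbdd: "bdd_below {q \<in> {0..1}. max 0 (min 1 a) \<le> Hh q}" for a by (rule bdd_belowI[of _ 0]) auto
  have Q_mono: "mono Q"
  proof (rule monoI)
    fix a b :: real assume "a \<le> b"
    then have sub: "{q \<in> {0..1}. max 0 (min 1 b) \<le> Hh q} \<subseteq> {q \<in> {0..1}. max 0 (min 1 a) \<le> Hh q}" by auto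
    have ne: "{q \<in> {0..1}. max 0 (min 1 b) \<le> Hh q} \<noteq> {}" using Qne[of b] by blast
    show "Q a \<le> Q b" unfolding Q_def
      by (rule cInf_superset_mono[OF ne Qbdd sub])
  qed
  have Qm[measurable]: "Q \<in> borel_measurable lborel" using borel_measurable_mono[OF Q_mono] by simp
  have Q01: "0 \<le> Q a \<and> Q a \<le> 1" for a
  proof
    have ne: "{q \<in> {0..1}. max 0 (min 1 a) \<le> Hh q} \<noteq> {}" using Qne[of a] by blast
    show "0 \<le> Q a" unfolding Q_def by (rule cInf_greatest[OF ne]) auto
    show "Q a \<le> 1" unfolding Q_def by (rule cInf_lower[OF Qne Qbdd])
  qed
  have Qge: "t \<le> Q a" if "a \<in> {0..1}" "t \<in> {0..1}" "Hh t < a" for a t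
    unfolding Q_def
  proof (rule cInf_greatest)
    show "{q \<in> {0..1}. max 0 (min 1 a) \<le> Hh q} \<noteq> {}" using Qne by blast
    fix q assume "q \<in> {q \<in> {0..1}. max 0 (min 1 a) \<le> Hh q}"
    then have "a \<le> Hh q" using that by auto
    show "t \<le> q"
    proof (rule ccontr)
      assume "\<not> t \<le> q"
      then have "Hh q \<le> Hh t" using Hh_mono by (auto simp: mono_def)
      then show False using \<open>a \<le> Hh q\<close> that by simp
    qed
  qed
  have Qhat_eq: "Qhat f s a = Q a" if "a \<in> {0..1}" for a
  proof -
    have "{q \<in> {0..1}. a \<le> Qhat_inv f s q} = {q \<in> {0..1}. max 0 (min 1 a) \<le> Hh q}"
      using that qinv_eq unfolding Hh_def by auto
    then show ?thesis unfolding Qhat_def Q_def by simp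
  qed
  have c_eq: "c = (\<integral>a. Q a * indicator {0..1} a \<partial>lborel)"
    unfolding c_def stage2_avg_quality_def set_lebesgue_integral_def
    by (intro Bochner_Integration.integral_cong) (auto simp: indicator_def Qhat_eq)
  have layer_c: "(\<integral>t. (1 - Hh t) * indicator {0..1} t \<partial>lborel) \<le> c"
    unfolding c_eq by (rule layer[OF Hh_mono _ Qm Qge Q01]) (use Hh01 in auto)
  have c_lo: "0 \<le> c" unfolding c_eq using Q01 by (auto intro!: integral_nonneg_AE)
  have c_hi: "c \<le> 1"
  proof -
    have i1: "integrable lborel (\<lambda>a. Q a * indicator {0..1} a)"
      by (rule bdd_int[OF Qm, of 1]) (use Q01 in auto)
    have i2: "integrable lborel (\<lambda>a::real. indicator {0..1} a :: real)" by simp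
    have "(\<integral>a. Q a * indicator {0..1} a \<partial>lborel) \<le> (\<integral>a. indicator {0..1::real} a \<partial>lborel)"
    proof (rule integral_mono'[OF i2])
      fix a :: real show "Q a * indicator {0..1} a \<le> indicator {0..1} a"
        using Q01[of a] by (auto simp: indicator_def)
      show "0 \<le> (indicator {0..1} a :: real)" by simp
    qed
    then have "c \<le> (\<integral>a. indicator {0..1::real} a \<partial>lborel)" unfolding c_eq .
    then show ?thesis by simp
  qed
  define D where "D t = 4 * RE m gam (S t) (G t) - 3 * RT (mu t)" for t
  have RT_b: "\<bar>RT (mu t)\<bar> \<le> 1" for t
  proof -
    have "(mu t)^2 \<le> 1" using mu_lo[of t] mu_hi[of t] power_mono[of "mu t" 1 2] by simp
    then have a: "0 \<le> RT (mu t)" unfolding RT_def by simp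
    have b: "RT (mu t) \<le> 1/2" unfolding RT_def by simp
    show ?thesis using a b by simp
  qed
  have RE_b: "\<bar>RE m gam (S t) (G t)\<bar> \<le> 1" for t
  proof -
    have g2: "(G t)^2 \<le> gam^2" using G_lo[of t] G_hi[of t] power_mono[of "G t" gam 2] by simp
    have gg: "gam^2 \<le> gam" using gam0 gam1 by (simp add: power2_eq_square mult_left_le_one_le)
    have a0: "0 \<le> (gam^2 - (G t)^2)/(2*gam)" using g2 gam0 by simp
    have a1: "(gam^2 - (G t)^2)/(2*gam) \<le> 1/2"
    proof -
      have h: "gam^2 - (G t)^2 \<le> gam" using gg by (smt (verit) zero_le_power2)
      then show ?thesis using gam0 by (simp add: pos_divide_le_eq)
    qed
    have b0: "0 \<le> (m - S t)/2" and b1: "(m - S t)/2 \<le> 1/2" using S_hi[of t] S_lo[of t] gam0 unfolding gam_def by auto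
    show ?thesis unfolding RE_def using a0 a1 b0 b1 by linarith
  qed
  have iT: "integrable lborel (\<lambda>t. RT (mu t) * indicator {0..1} t)"
    by (rule bdd_int[of _ 1]) (use RT_b in \<open>auto simp: RT_def\<close>)
  have iE: "integrable lborel (\<lambda>t. RE m gam (S t) (G t) * indicator {0..1} t)"
    by (rule bdd_int[of _ 1]) (use RE_b in \<open>auto simp: RE_def\<close>)
  have iD: "integrable lborel (\<lambda>t. D t * indicator {0..1} t)"
  proof -
    have Dm: "D \<in> borel_measurable lborel" unfolding D_def RE_def RT_def by simp
    have Db: "\<bar>D t\<bar> \<le> 7" for t
    proof -
      have a: "-1 \<le> RE m gam (S t) (G t) \<and> RE m gam (S t) (G t) \<le> 1" using RE_b[of t] by (simp add: abs_le_iff)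
      have b: "-1 \<le> RT (mu t) \<and> RT (mu t) \<le> 1" using RT_b[of t] by (simp add: abs_le_iff)
      show ?thesis unfolding D_def using a b by (simp add: abs_le_iff)
    qed
    show ?thesis by (rule bdd_int[OF Dm Db])
  qed
  have Dint: "(\<integral>t. D t * indicator {0..1} t \<partial>lborel)
      = 4 * welfare f (eq_ability f s) - 3 * welfare f (QT_inv f)"
  proof -
    have "(\<integral>t. D t * indicator {0..1} t \<partial>lborel)
        = (\<integral>t. 4 * (RE m gam (S t) (G t) * indicator {0..1} t) - 3 * (RT (mu t) * indicator {0..1} t) \<partial>lborel)"
      unfolding D_def by (intro Bochner_Integration.integral_cong) (auto simp: algebra_simps)
    also have "\<dots> = 4 * (\<integral>t. RE m gam (S t) (G t) * indicator {0..1} t \<partial>lborel) - 3 * (\<integral>t. RT (mu t) * indicator {0..1} t \<partial>lborel)"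
      using iT iE by simp
    finally show ?thesis unfolding WT WE WT2 WE2 .
  qed
  have goal: "0 \<le> (\<integral>t. D t * indicator {0..1} t \<partial>lborel)"
  proof (cases "m = 0")
    case True
    have "0 \<le> D t" for t
    proof -
      have St: "S t = 0" using S_lo[of t] S_hi[of t] True by simp
      have g1: "gam = 1" unfolding gam_def using True by simp
      have "G t = mu t" using mu_add[of t] St by simp
      then have "D t = 4 * RE 0 1 0 (mu t) - 3 * RT (mu t)" unfolding D_def using St g1 True by simp
      then show ?thesis using algD[OF mu_lo mu_hi] by simp
    qed
    then show ?thesis by (intro integral_nonneg_AE AE_I2) simp
  next
    case False
    then have mpos: "0 < m" using m0 by simp
    obtain q0 where q0: "q0 \<in> {0..1}" "0 < s q0"
    proof (rule ccontr)
      assume "\<not> thesis"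
      then have z: "\<And>q. q \<in> {0..1} \<Longrightarrow> s q = 0" using that s01 by (metis less_eq_real_def)
      have "(\<integral>q. Fs q \<partial>lborel) = (\<integral>q. (0::real) \<partial>(lborel::real measure))"
        unfolding Fs_def by (intro Bochner_Integration.integral_cong) (auto simp: indicator_def z)
      then show False using Fs1 mpos by simp
    qed
    have cq0: "c \<le> q0" and Hq0: "Hh q0 \<le> 1/2"
      using c1[OF q0] qinv_eq[OF q0(1)] unfolding c_def Hh_def by auto
    define psi where "psi t = (1 - Hh t) - indicator {..<c} t" for t
    have pw: "0 \<le> D t + (1/3) * psi t" if t01: "t \<in> {0..1}" for t
    proof -
      define y where "y = Hh t"
      have Gy: "G t = gam * y" unfolding y_def Hh_def using gam0 by simp
      have y0: "0 \<le> y" and y1: "y \<le> 1" using Hh01[of t] unfolding y_def by auto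
      have mg: "m = 1 - gam" unfolding gam_def by simp
      show ?thesis
      proof (cases "t < c")
        case True
        have St: "S t = 0"
        proof -
          have "S t = (\<integral>r. (0::real) \<partial>(lborel::real measure))" unfolding S_def
          proof (intro Bochner_Integration.integral_cong refl)
            fix r :: real
            show "Fs r * indicator {..t} r = 0"
            proof (cases "r \<in> {0..1} \<and> r \<le> t")
              case True
              have "\<not> 0 < s r"
              proof
                assume "0 < s r"
                then have "c \<le> r" using c1[of r] True unfolding c_def by auto
                then show False using True \<open>t < c\<close> by simp
              qed
              then have "s r = 0" using s01[of r] by simp
              then show ?thesis unfolding Fs_def by simp
            next
              case False then show ?thesis unfolding Fs_def by (auto simp: indicator_def)
            qed
          qed
          then show ?thesis by simp
        qed
        have "y \<le> Hh q0" unfolding y_def using Hh_mono True cq0 by (auto simp: mono_def)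
        then have yh: "y \<le> 1/2" using Hq0 by simp
        have xe: "mu t = gam * y" using mu_add[of t] St Gy by simp
        have "0 \<le> 4 * RE m gam 0 (gam*y) - 3 * RT (mu t) + (1/3) * ((1 - y) - 1)"
          by (rule algA[OF gam0 gam1 mg xe y0 yh])
        moreover have "psi t = (1 - y) - 1" unfolding psi_def y_def using True by simp
        ultimately show ?thesis unfolding D_def St Gy by simp
      next
        case nc: False
        have pe: "psi t = 1 - y" unfolding psi_def y_def using nc by simp
        show ?thesis
        proof (cases "y \<le> 1/2")
          case True
          have xe: "mu t = S t + gam * y" using mu_add[of t] Gy by simp
          have "0 \<le> 4 * RE m gam (S t) (gam*y) - 3 * RT (mu t) + (1/3) * (1 - y)"
            by (rule algB[OF gam0 mg xe y0 True])
          then show ?thesis unfolding D_def pe Gy by simp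
        next
          case False
          then have yh: "1/2 < y" by simp
          have St: "S t = m"
          proof -
            have "(\<integral>r. Fs r * indicator {t<..} r \<partial>lborel) = (\<integral>r. (0::real) \<partial>(lborel::real measure))"
            proof (intro Bochner_Integration.integral_cong refl)
              fix r :: real
              show "Fs r * indicator {t<..} r = 0"
              proof (cases "r \<in> {0..1} \<and> t < r")
                case True
                have "\<not> 0 < s r"
                proof
                  assume "0 < s r"
                  then have "Hh r \<le> 1/2" using c1[of r] True qinv_eq[of r] unfolding Hh_def by auto
                  moreover have "Hh t \<le> Hh r" using Hh_mono True by (auto simp: mono_def)
                  ultimately show False using yh unfolding y_def by simp
                qed
                then have "s r = 0" using s01[of r] by simp
                then show ?thesis unfolding Fs_def by simp
              next
                case False then show ?thesis unfolding Fs_def by (auto simp: indicator_def)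
              qed
            qed
            then show ?thesis using cum_split[OF Fsi, of t] Fs1 unfolding S_def by simp
          qed
          have xe: "mu t = m + gam * y" using mu_add[of t] St Gy by simp
          have "0 \<le> 4 * RE m gam m (gam*y) - 3 * RT (mu t) + (1/3) * (1 - y)"
            by (rule algC[OF gam0 mg xe yh y1])
          then show ?thesis unfolding D_def pe Gy St by simp
        qed
      qed
    qed
    have iH: "integrable lborel (\<lambda>t. (1 - Hh t) * indicator {0..1} t)"
      by (rule bdd_int[of _ 1]) (use Hh01 in \<open>auto simp: Hh_def\<close>)
    have ic: "integrable lborel (\<lambda>t. indicator {..<c} t * indicator {0..1} t :: real)"
      by (rule bdd_int[of _ 1]) (auto simp: indicator_def)
    have cint: "(\<integral>t. (indicator {..<c} t * indicator {0..1} t :: real) \<partial>lborel) = c"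
    proof -
      have "(\<integral>t. indicator {..<c} t * indicator {0..1} t \<partial>lborel) = (\<integral>t. (indicator {0..<c} t :: real) \<partial>lborel)"
        using c_hi by (intro Bochner_Integration.integral_cong) (auto simp: indicator_def)
      also have "\<dots> = c" using c_lo by simp
      finally show ?thesis .
    qed
    have "0 \<le> (\<integral>t. (D t + (1/3) * psi t) * indicator {0..1} t \<partial>lborel)"
      using pw by (intro integral_nonneg_AE AE_I2) (auto simp: indicator_def)
    also have "(\<integral>t. (D t + (1/3) * psi t) * indicator {0..1} t \<partial>lborel)
        = (\<integral>t. D t * indicator {0..1} t + (1/3) * ((1 - Hh t) * indicator {0..1} t) - (1/3) * (indicator {..<c} t * indicator {0..1} t) \<partial>lborel)"
      unfolding psi_def by (intro Bochner_Integration.integral_cong) (auto simp: algebra_simps)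
    also have "\<dots> = (\<integral>t. D t * indicator {0..1} t \<partial>lborel) + (1/3) * (\<integral>t. (1 - Hh t) * indicator {0..1} t \<partial>lborel) - (1/3) * c"
      using iD iH ic cint by simp
    finally show ?thesis using layer_c by simp
  qed
  show ?thesis using goal Dint by simp
qed

end
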